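(* Let $\sigma:\mathbb{R}\to\mathbb{R}$ be Lipschitz continuous with exactly $n$ zeros $x_1<\cdots<x_n$, and set $x_0=-\infty$, $x_{n+1}=+\infty$. For $i=0,1,\dots,n$ let $H_i(x)=\int_{a_i}^x\frac{\mathrm{d}y}{\sigma(y)}$ for $x\in(x_i,x_{i+1})$, where $a_i\in(x_i,x_{i+1})$ is a constant. Then for each $i=0,1,\dots,n$: (i) $H_i$ is well defined and monotone on $(x_i,x_{i+1})$; (ii) $H_i$ is a bijection from $(x_i,x_{i+1})$ onto $(-\infty,\infty)$; (iii) $H_i$ has an inverse $H_i^{-1}$, which is a bijection from $(-\infty,\infty)$ onto $(x_i,x_{i+1})$; (iv) for every $y\in\mathbb{R}$, the map $x\mapsto H_i^{-1}(H_i(x)+y)$ is a bijection from $(x_i,x_{i+1})$ onto $(x_i,x_{i+1})$, and $$\lim_{x\to x_i^+}H_i^{-1}(H_i(x)+y)=x_i,\qquad \lim_{x\to x_{i+1}^-}H_i^{-1}(H_i(x)+y)=x_{i+1}.$$ *)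

theory Defs
  imports "HOL-Analysis.Analysis"
begin

text \<open>The open interval (x_i, x_(i+1)) between consecutive zeros, with the
conventions x_0 = -infinity and x_(n+1) = +infinity.\<close>
definition zero_gap :: "(nat \<Rightarrow> real) \<Rightarrow> nat \<Rightarrow> nat \<Rightarrow> real set" where
  "zero_gap xs n i = {t. (i = 0 \<or> xs i < t) \<and> (i = n \<or> t < xs (Suc i))}"

definition oriented_integral :: "real \<Rightarrow> real \<Rightarrow> (real \<Rightarrow> real) \<Rightarrow> real" where
  "oriented_integral a x f = (if a \<le> x then integral {a..x} f else - integral {x..a} f)"

definition H_fun :: "(real \<Rightarrow> real) \<Rightarrow> real \<Rightarrow> real \<Rightarrow> real" where
  "H_fun \<sigma> a x = oriented_integral a x (\<lambda>y. 1 / \<sigma> y)"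

end

theory Submission
  imports Defs
begin


lemma zg_conv: "x \<in> zero_gap xs n i \<Longrightarrow> z \<in> zero_gap xs n i \<Longrightarrow> x \<le> w \<Longrightarrow> w \<le> z \<Longrightarrow> w \<in> zero_gap xs n i"
  by (auto simp: zero_gap_def)

lemma zg_open: "open (zero_gap xs n i)"
proof -
  have "zero_gap xs n i = (if i=0 then UNIV else {xs i<..}) \<inter> (if i = n then UNIV else {..<xs (Suc i)})"
    by (auto simp: zero_gap_def)
  then show ?thesis by (auto intro!: open_Int)
qed

lemma orient_repr:
  assumes "continuous_on {p..q} f" "p \<le> a" "a \<le> q" "p \<le> z" "z \<le> q"
  shows "oriented_integral a z f = integral {p..z} f - integral {p..a} f"
proof (cases "a \<le> z")
  case True
  have "f integrable_on {p..z}"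
    by (rule integrable_continuous_interval, rule continuous_on_subset[OF assms(1)]) (use assms in auto)
  then have "integral {p..a} f + integral {a..z} f = integral {p..z} f"
    using Henstock_Kurzweil_Integration.integral_combine[where a=p and c=a and b=z and f=f] True assms by auto
  then show ?thesis using True by (simp add: oriented_integral_def)
next
  case False
  have "f integrable_on {p..a}"
    by (rule integrable_continuous_interval, rule continuous_on_subset[OF assms(1)]) (use assms in auto)
  then have "integral {p..z} f + integral {z..a} f = integral {p..a} f"
    using Henstock_Kurzweil_Integration.integral_combine[where a=p and c=z and b=a and f=f] False assms by auto
  then show ?thesis using False by (simp add: oriented_integral_def)
qed

lemma H_deriv:
  assumes cf: "continuous_on (zero_gap xs n i) f" and aG: "a \<in> zero_gap xs n i" and xG: "x \<in> zero_gap xs n i"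
  shows "((\<lambda>z. oriented_integral a z f) has_real_derivative f x) (at x)"
proof -
  let ?G = "zero_gap xs n i"
  obtain e where e: "e > 0" "ball x e \<subseteq> ?G" using zg_open xG open_contains_ball by blast
  define p where "p = min a (x - e/2)"
  define q where "q = max a (x + e/2)"
  have xe1: "x - e/2 \<in> ?G" using e by (intro subsetD[OF e(2)]) (auto simp: dist_real_def)
  have xe2: "x + e/2 \<in> ?G" using e by (intro subsetD[OF e(2)]) (auto simp: dist_real_def)
  have pG: "p \<in> ?G" using aG xe1 by (auto simp: p_def min_def)
  have qG: "q \<in> ?G" using aG xe2 by (auto simp: q_def max_def)
  have sub: "{p..q} \<subseteq> ?G" using zg_conv[OF pG qG] by auto
  have cpq: "continuous_on {p..q} f" using continuous_on_subset[OF cf sub] .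
  have px: "p < x" "x < q" using e by (auto simp: p_def q_def)
  have "((\<lambda>u. integral {p..u} f) has_vector_derivative f x) (at x within {p..q})"
    using integral_has_vector_derivative[OF cpq, of x] px by auto
  moreover have "at x within {p..q} = at x"
    using px by (intro at_within_interior) auto
  ultimately have "((\<lambda>u. integral {p..u} f) has_real_derivative f x) (at x)"
    by (simp add: has_real_derivative_iff_has_vector_derivative)
  then have d: "((\<lambda>u. integral {p..u} f - integral {p..a} f) has_real_derivative f x) (at x)"
    by (auto intro!: derivative_eq_intros)
  show ?thesis
  proof (rule has_field_derivative_transform_within_open[OF d, of "{p<..<q}"])
    fix z assume "z \<in> {p<..<q}"
    then show "integral {p..z} f - integral {p..a} f = oriented_integral a z f"
      using orient_repr[OF cpq, of a z] by (auto simp: p_def q_def)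
  qed (use px in auto)
qed

lemma cmp:
  assumes "x \<le> b"
    and "\<And>z. x \<le> z \<Longrightarrow> z \<le> b \<Longrightarrow> (H has_real_derivative h z) (at z)"
    and "\<And>z. x \<le> z \<Longrightarrow> z \<le> b \<Longrightarrow> (P has_real_derivative p z) (at z)"
    and "\<And>z. x \<le> z \<Longrightarrow> z \<le> b \<Longrightarrow> p z \<le> h z"
  shows "P b - P x \<le> H b - H x"
proof -
  have "(\<lambda>z. H z - P z) x \<le> (\<lambda>z. H z - P z) b"
    by (rule DERIV_nonneg_imp_nondecreasing[OF assms(1)])
       (use assms in \<open>auto intro!: exI DERIV_diff\<close>)
  then show ?thesis by simp
qed



lemma pos_case:
  fixes \<sigma> :: "real \<Rightarrow> real"
  assumes L: "L-lipschitz_on UNIV \<sigma>" and Lp: "L > 0"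
    and aG: "a \<in> zero_gap xs n i"
    and pos: "\<forall>x\<in>zero_gap xs n i. \<sigma> x > 0"
    and zl: "i \<noteq> 0 \<Longrightarrow> \<sigma> (xs i) = 0" and zr: "i \<noteq> n \<Longrightarrow> \<sigma> (xs (Suc i)) = 0"
  shows "(\<forall>x\<in>zero_gap xs n i. (H_fun \<sigma> a has_real_derivative 1/\<sigma> x) (at x))
    \<and> (if i = 0 then filterlim (H_fun \<sigma> a) at_bot at_bot else filterlim (H_fun \<sigma> a) at_bot (at_right (xs i)))
    \<and> (if i = n then filterlim (H_fun \<sigma> a) at_top at_top else filterlim (H_fun \<sigma> a) at_top (at_left (xs (Suc i))))"
proof -
  let ?G = "zero_gap xs n i"
  let ?H = "H_fun \<sigma> a"
  have cs: "continuous_on UNIV \<sigma>" using L by (rule lipschitz_on_continuous_on)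
  have cf: "continuous_on ?G (\<lambda>y. 1/\<sigma> y)"
    using continuous_on_subset[OF cs, of ?G] pos by (auto intro!: continuous_intros)
  have Heq: "?H = (\<lambda>z. oriented_integral a z (\<lambda>y. 1/\<sigma> y))" by (rule ext) (simp add: H_fun_def)
  have D: "\<And>x. x \<in> ?G \<Longrightarrow> (?H has_real_derivative 1/\<sigma> x) (at x)"
    unfolding Heq using H_deriv[OF cf aG] by blast
  have lip: "\<And>u v. \<bar>\<sigma> u - \<sigma> v\<bar> \<le> L * \<bar>u - v\<bar>"
    using L by (auto simp: lipschitz_on_def dist_real_def)
  have ca: "\<sigma> a > 0" using pos aG by auto
  have limL: "if i = 0 then filterlim ?H at_bot at_bot else filterlim ?H at_bot (at_right (xs i))"
  proof (cases "i = 0")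
    case True
    define c where "c = \<sigma> a"
    have c0: "c > 0" using ca c_def by simp
    define P where "P = (\<lambda>z. - ln (c + L*(a - z))/L)"
    have bound: "?H x \<le> ?H a - P a + P x" if x: "x \<le> a" for x
    proof -
      have "P a - P x \<le> ?H a - ?H x"
      proof (rule cmp[OF x])
        fix z assume z: "x \<le> z" "z \<le> a"
        have zG: "z \<in> ?G" using aG z True by (auto simp: zero_gap_def)
        show "(?H has_real_derivative 1/\<sigma> z) (at z)" using D zG by blast
        have pos': "c + L*(a-z) > 0" using c0 Lp z by (simp add: add_pos_nonneg)
        show "(P has_real_derivative 1/(c + L*(a-z))) (at z)"
          unfolding P_def by (insert pos' Lp, (rule derivative_eq_intros refl | simp)+)
        have "\<sigma> z - \<sigma> a \<le> L * (a - z)" using lip[of z a] z by (auto simp: abs_if split: if_splits)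
        then have "\<sigma> z \<le> c + L*(a-z)" by (simp add: c_def)
        then show "1/(c+L*(a-z)) \<le> 1/\<sigma> z"
          using pos zG by (intro frac_le) auto
      qed
      then show ?thesis by simp
    qed
    have "filterlim ?H at_bot at_bot"
      unfolding filterlim_at_bot
    proof
      fix Z
      define K where "K = ?H a - P a"
      define N where "N = a - exp ((K - Z)*L)/L"
      have "eventually (\<lambda>x. x \<le> N) at_bot" by (rule eventually_le_at_bot)
      then show "eventually (\<lambda>x. ?H x \<le> Z) at_bot"
      proof (rule eventually_mono)
        fix x assume x: "x \<le> N"
        have e0: "exp ((K - Z)*L)/L > 0" using Lp by simp
        have xa: "x \<le> a" using x e0 unfolding N_def by linarith
        have "exp ((K - Z)*L)/L \<le> a - x" using x unfolding N_def by linarith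
        then have "exp ((K - Z)*L) \<le> L*(a - x)" using Lp by (simp add: field_simps)
        then have ex: "exp ((K - Z)*L) \<le> c + L*(a-x)" using c0 by linarith
        have p': "c + L*(a-x) > 0" using c0 Lp xa by (simp add: add_pos_nonneg)
        have "(K-Z)*L \<le> ln (c + L*(a-x))" using ln_ge_iff[OF p'] ex by simp
        then have "K - Z \<le> ln (c + L*(a-x)) / L" using Lp by (simp add: field_simps)
        then have "P x \<le> Z - K" unfolding P_def by simp
        then show "?H x \<le> Z" using bound[OF xa] K_def by simp
      qed
    qed
    then show ?thesis using True by simp
  next
    case False
    define l where "l = xs i"
    have la: "l < a" using aG False by (auto simp: zero_gap_def l_def)
    have sl: "\<sigma> l = 0" using zl False l_def by simp
    define P where "P = (\<lambda>z. ln (z - l)/L)"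
    have bound: "?H x \<le> ?H a - P a + P x" if x: "l < x" "x \<le> a" for x
    proof -
      have "P a - P x \<le> ?H a - ?H x"
      proof (rule cmp[OF x(2)])
        fix z assume z: "x \<le> z" "z \<le> a"
        have zG: "z \<in> ?G" using aG z x False by (auto simp: zero_gap_def l_def)
        show "(?H has_real_derivative 1/\<sigma> z) (at z)" using D zG by blast
        have pos': "z - l > 0" using z x by simp
        show "(P has_real_derivative 1/(L*(z-l))) (at z)"
          unfolding P_def by (insert pos' Lp, (rule derivative_eq_intros refl | simp)+)
        have "\<sigma> z \<le> L * (z - l)" using lip[of z l] z x sl by (auto simp: abs_if split: if_splits)
        then show "1/(L*(z-l)) \<le> 1/\<sigma> z"
          using pos zG by (intro frac_le) auto
      qed
      then show ?thesis by simp
    qed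
    have "filterlim ?H at_bot (at_right l)"
      unfolding filterlim_at_bot
    proof
      fix Z
      define K where "K = ?H a - P a"
      define d where "d = min (a - l) (exp ((Z - K)*L))"
      have d0: "d > 0" using la by (simp add: d_def)
      show "eventually (\<lambda>x. ?H x \<le> Z) (at_right l)"
      proof (rule eventually_at_rightI[of l "l + d"])
        fix x assume x: "x \<in> {l<..<l+d}"
        have xa: "x \<le> a" using x by (auto simp: d_def min_def split: if_splits)
        have "x - l \<le> exp ((Z - K)*L)" using x by (auto simp: d_def min_def split: if_splits)
        then have "ln (x - l) \<le> ln (exp ((Z - K)*L))" using x by (subst ln_le_cancel_iff) auto
        then have "ln (x - l) \<le> (Z - K)*L" by simp
        then have "ln (x - l)/L \<le> Z - K" using Lp by (simp add: field_simps)
        then have "P x \<le> Z - K" unfolding P_def by simp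
        then show "?H x \<le> Z" using bound[OF _ xa] x K_def by simp
      qed (use d0 in simp)
    qed
    then show ?thesis using False l_def by simp
  qed
  have limR: "if i = n then filterlim ?H at_top at_top else filterlim ?H at_top (at_left (xs (Suc i)))"
  proof (cases "i = n")
    case True
    define c where "c = \<sigma> a"
    have c0: "c > 0" using ca c_def by simp
    define P where "P = (\<lambda>z. ln (c + L*(z - a))/L)"
    have bound: "?H a - P a + P x \<le> ?H x" if x: "a \<le> x" for x
    proof -
      have "P x - P a \<le> ?H x - ?H a"
      proof (rule cmp[OF x])
        fix z assume z: "a \<le> z" "z \<le> x"
        have zG: "z \<in> ?G" using aG z True by (auto simp: zero_gap_def)
        show "(?H has_real_derivative 1/\<sigma> z) (at z)" using D zG by blast
        have pos': "c + L*(z-a) > 0" using c0 Lp z by (simp add: add_pos_nonneg)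
        show "(P has_real_derivative 1/(c + L*(z-a))) (at z)"
          unfolding P_def by (insert pos' Lp, (rule derivative_eq_intros refl | simp)+)
        have "\<sigma> z - \<sigma> a \<le> L * (z - a)" using lip[of z a] z by (auto simp: abs_if split: if_splits)
        then have "\<sigma> z \<le> c + L*(z-a)" by (simp add: c_def)
        then show "1/(c+L*(z-a)) \<le> 1/\<sigma> z"
          using pos zG by (intro frac_le) auto
      qed
      then show ?thesis by simp
    qed
    have "filterlim ?H at_top at_top"
      unfolding filterlim_at_top
    proof
      fix Z
      define K where "K = ?H a - P a"
      define N where "N = a + exp ((Z - K)*L)/L"
      have "eventually (\<lambda>x. N \<le> x) at_top" by (rule eventually_ge_at_top)
      then show "eventually (\<lambda>x. Z \<le> ?H x) at_top"
      proof (rule eventually_mono)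
        fix x assume x: "N \<le> x"
        have e0: "exp ((Z - K)*L)/L > 0" using Lp by simp
        have xa: "a \<le> x" using x e0 unfolding N_def by linarith
        have "exp ((Z - K)*L)/L \<le> x - a" using x unfolding N_def by linarith
        then have "exp ((Z - K)*L) \<le> L*(x - a)" using Lp by (simp add: field_simps)
        then have ex: "exp ((Z - K)*L) \<le> c + L*(x-a)" using c0 by linarith
        have p': "c + L*(x-a) > 0" using c0 Lp xa by (simp add: add_pos_nonneg)
        have "(Z-K)*L \<le> ln (c + L*(x-a))" using ln_ge_iff[OF p'] ex by simp
        then have "Z - K \<le> ln (c + L*(x-a)) / L" using Lp by (simp add: field_simps)
        then have "Z - K \<le> P x" unfolding P_def by simp
        then show "Z \<le> ?H x" using bound[OF xa] K_def by simp
      qed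
    qed
    then show ?thesis using True by simp
  next
    case False
    define u where "u = xs (Suc i)"
    have au: "a < u" using aG False by (auto simp: zero_gap_def u_def)
    have su: "\<sigma> u = 0" using zr False u_def by simp
    define P where "P = (\<lambda>z. - ln (u - z)/L)"
    have bound: "?H a - P a + P x \<le> ?H x" if x: "a \<le> x" "x < u" for x
    proof -
      have "P x - P a \<le> ?H x - ?H a"
      proof (rule cmp[OF x(1)])
        fix z assume z: "a \<le> z" "z \<le> x"
        have zG: "z \<in> ?G" using aG z x False by (auto simp: zero_gap_def u_def)
        show "(?H has_real_derivative 1/\<sigma> z) (at z)" using D zG by blast
        have pos': "u - z > 0" using z x by simp
        show "(P has_real_derivative 1/(L*(u-z))) (at z)"
          unfolding P_def by (insert pos' Lp, (rule derivative_eq_intros refl | simp)+)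
        have "\<sigma> z \<le> L * (u - z)" using lip[of z u] z x su by (auto simp: abs_if split: if_splits)
        then show "1/(L*(u-z)) \<le> 1/\<sigma> z"
          using pos zG by (intro frac_le) auto
      qed
      then show ?thesis by simp
    qed
    have "filterlim ?H at_top (at_left u)"
      unfolding filterlim_at_top
    proof
      fix Z
      define K where "K = ?H a - P a"
      define d where "d = min (u - a) (exp ((K - Z)*L))"
      have d0: "d > 0" using au by (simp add: d_def)
      show "eventually (\<lambda>x. Z \<le> ?H x) (at_left u)"
      proof (rule eventually_at_leftI[where a="u - d" and b=u])
        fix x assume x: "x \<in> {u-d<..<u}"
        have xa: "a \<le> x" using x by (auto simp: d_def min_def split: if_splits)
        have "u - x \<le> exp ((K - Z)*L)" using x by (auto simp: d_def min_def split: if_splits)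
        then have "ln (u - x) \<le> ln (exp ((K - Z)*L))" using x by (subst ln_le_cancel_iff) auto
        then have "ln (u - x) \<le> (K - Z)*L" by simp
        then have "ln (u - x)/L \<le> K - Z" using Lp by (simp add: field_simps)
        then have "Z - K \<le> P x" unfolding P_def by simp
        then show "Z \<le> ?H x" using bound[OF xa] x K_def by simp
      qed (use d0 in simp)
    qed
    then show ?thesis using False u_def by simp
  qed
  show ?thesis using D limL limR by blast
qed



lemma abs_inc:
  fixes H :: "real \<Rightarrow> real"
  assumes aG: "a \<in> zero_gap xs n i"
    and D: "\<forall>x\<in>zero_gap xs n i. \<exists>d>0. (H has_real_derivative d) (at x)"
    and limL: "if i = 0 then filterlim H at_bot at_bot else filterlim H at_bot (at_right (xs i))"
    and limR: "if i = n then filterlim H at_top at_top else filterlim H at_top (at_left (xs (Suc i)))"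
  shows "strict_mono_on (zero_gap xs n i) H
    \<and> bij_betw H (zero_gap xs n i) UNIV
    \<and> bij_betw (inv_into (zero_gap xs n i) H) UNIV (zero_gap xs n i)
    \<and> (\<forall>x\<in>zero_gap xs n i. inv_into (zero_gap xs n i) H (H x) = x)
    \<and> (\<forall>t. H (inv_into (zero_gap xs n i) H t) = t)
    \<and> (\<forall>y::real.
         bij_betw (\<lambda>x. inv_into (zero_gap xs n i) H (H x + y))
                  (zero_gap xs n i) (zero_gap xs n i)
       \<and> (if i = 0
          then filterlim (\<lambda>x. inv_into (zero_gap xs n i) H (H x + y)) at_bot at_bot
          else ((\<lambda>x. inv_into (zero_gap xs n i) H (H x + y))
                  \<longlongrightarrow> xs i) (at_right (xs i)))
       \<and> (if i = n
          then filterlim (\<lambda>x. inv_into (zero_gap xs n i) H (H x + y)) at_top at_top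
          else ((\<lambda>x. inv_into (zero_gap xs n i) H (H x + y))
                  \<longlongrightarrow> xs (Suc i)) (at_left (xs (Suc i)))))"
proof -
  let ?G = "zero_gap xs n i"
  let ?I = "inv_into ?G H"
  have sm: "strict_mono_on ?G H"
  proof (rule strict_mono_onI)
    fix r s assume rs: "r \<in> ?G" "s \<in> ?G" "r < s"
    show "H r < H s"
    proof (rule DERIV_pos_imp_increasing[OF rs(3)])
      fix x assume "r \<le> x" "x \<le> s"
      then have "x \<in> ?G" using zg_conv[OF rs(1,2)] by blast
      then show "\<exists>y. (H has_real_derivative y) (at x) \<and> 0 < y" using D by blast
    qed
  qed
  have less_iff: "H u < H v \<longleftrightarrow> u < v" if "u \<in> ?G" "v \<in> ?G" for u v
    using sm that by (metis linorder_neq_iff order_less_asym strict_mono_onD)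
  have le_iff: "H u \<le> H v \<longleftrightarrow> u \<le> v" if "u \<in> ?G" "v \<in> ?G" for u v
    using less_iff[OF that(2,1)] by (auto simp: not_less[symmetric])
  have cont: "continuous_on ?G H"
    using D by (intro continuous_at_imp_continuous_on) (auto intro: DERIV_isCont)
  have evL: "eventually (\<lambda>x. x \<in> ?G) (if i = 0 then at_bot else at_right (xs i))"
  proof (cases "i = 0")
    case True
    have "eventually (\<lambda>x. x \<le> a) at_bot" by (rule eventually_le_at_bot)
    then show ?thesis using True aG by (auto elim!: eventually_mono simp: zero_gap_def)
  next
    case False
    have "xs i < a" using aG False by (auto simp: zero_gap_def)
    then have "eventually (\<lambda>x. x \<in> {xs i<..<a}) (at_right (xs i))" by (rule eventually_at_right_real)
    then show ?thesis using False aG by (auto elim!: eventually_mono simp: zero_gap_def)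
  qed
  have evR: "eventually (\<lambda>x. x \<in> ?G) (if i = n then at_top else at_left (xs (Suc i)))"
  proof (cases "i = n")
    case True
    have "eventually (\<lambda>x. a \<le> x) at_top" by (rule eventually_ge_at_top)
    then show ?thesis using True aG by (auto elim!: eventually_mono simp: zero_gap_def)
  next
    case False
    have "a < xs (Suc i)" using aG False by (auto simp: zero_gap_def)
    then have "eventually (\<lambda>x. x \<in> {a<..<xs (Suc i)}) (at_left (xs (Suc i)))" by (rule eventually_at_left_real)
    then show ?thesis using False aG by (auto elim!: eventually_mono simp: zero_gap_def)
  qed
  have nbL: "(if i = 0 then at_bot else at_right (xs i)) \<noteq> (bot :: real filter)"
    by (simp add: trivial_limit_at_bot_linorder trivial_limit_at_right_real)
  have nbR: "(if i = n then at_top else at_left (xs (Suc i))) \<noteq> (bot :: real filter)"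
    by (simp add: trivial_limit_at_top_linorder trivial_limit_at_left_real)
  have limL': "filterlim H at_bot (if i = 0 then at_bot else at_right (xs i))"
    using limL by (cases "i = 0") auto
  have limR': "filterlim H at_top (if i = n then at_top else at_left (xs (Suc i)))"
    using limR by (cases "i = n") auto
  have lo: "\<exists>x\<in>?G. H x \<le> t" for t
  proof -
    have "eventually (\<lambda>x. H x \<le> t \<and> x \<in> ?G) (if i = 0 then at_bot else at_right (xs i))"
      using limL' evL unfolding filterlim_at_bot by (auto intro: eventually_conj)
    then show ?thesis using eventually_happens'[OF nbL] by blast
  qed
  have hi: "\<exists>x\<in>?G. t \<le> H x" for t
  proof -
    have "eventually (\<lambda>x. t \<le> H x \<and> x \<in> ?G) (if i = n then at_top else at_left (xs (Suc i)))"
      using limR' evR unfolding filterlim_at_top by (auto intro: eventually_conj)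
    then show ?thesis using eventually_happens'[OF nbR] by blast
  qed
  have surj: "H ` ?G = UNIV"
  proof (intro set_eqI iffI)
    fix t :: real
    obtain x1 where x1: "x1 \<in> ?G" "H x1 \<le> t" using lo by blast
    obtain x2 where x2: "x2 \<in> ?G" "t \<le> H x2" using hi by blast
    have x12: "x1 \<le> x2" using le_iff[OF x1(1) x2(1)] x1 x2 le_iff[OF x2(1) x1(1)] by linarith
    have sub: "{x1..x2} \<subseteq> ?G" using zg_conv[OF x1(1) x2(1)] by auto
    obtain x where xx: "x1 \<le> x" "x \<le> x2" "H x = t"
      using IVT'[OF x1(2) x2(2) x12 continuous_on_subset[OF cont sub]] by auto
    have "x \<in> ?G" using sub xx by auto
    then show "t \<in> H ` ?G" using xx by (intro image_eqI[where x=x]) auto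
  qed auto
  have inj: "inj_on H ?G" using sm by (rule strict_mono_on_imp_inj_on)
  have bijH: "bij_betw H ?G UNIV" using inj surj by (simp add: bij_betw_def)
  have bijI: "bij_betw ?I UNIV ?G" using bij_betw_inv_into[OF bijH] .
  have IH: "\<forall>x\<in>?G. ?I (H x) = x" using inj by (simp add: inv_into_f_f)
  have HI: "\<forall>t. H (?I t) = t" using surj by (simp add: f_inv_into_f)
  have IG: "?I t \<in> ?G" for t using surj by (simp add: inv_into_into)
  have part: "bij_betw (\<lambda>x. ?I (H x + y)) ?G ?G
       \<and> (if i = 0 then filterlim (\<lambda>x. ?I (H x + y)) at_bot at_bot
          else ((\<lambda>x. ?I (H x + y)) \<longlongrightarrow> xs i) (at_right (xs i)))
       \<and> (if i = n then filterlim (\<lambda>x. ?I (H x + y)) at_top at_top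
          else ((\<lambda>x. ?I (H x + y)) \<longlongrightarrow> xs (Suc i)) (at_left (xs (Suc i))))" for y
  proof (intro conjI)
    have bt: "bij_betw (\<lambda>t. t + y) UNIV UNIV"
      by (rule bij_betwI[where g="\<lambda>t. t - y"]) auto
    have b1: "bij_betw ((\<lambda>t. t + y) \<circ> H) ?G UNIV" by (rule bij_betw_trans[OF bijH bt])
    have "bij_betw (?I \<circ> ((\<lambda>t. t + y) \<circ> H)) ?G ?G" by (rule bij_betw_trans[OF b1 bijI])
    then show "bij_betw (\<lambda>x. ?I (H x + y)) ?G ?G" by (simp add: o_def)
  next
    show "if i = 0 then filterlim (\<lambda>x. ?I (H x + y)) at_bot at_bot
          else ((\<lambda>x. ?I (H x + y)) \<longlongrightarrow> xs i) (at_right (xs i))"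
    proof (cases "i = 0")
      case True
      have "filterlim (\<lambda>x. ?I (H x + y)) at_bot at_bot"
        unfolding filterlim_at_bot
      proof
        fix Z
        define c where "c = min Z a"
        have cG: "c \<in> ?G" using aG True by (auto simp: zero_gap_def c_def min_def)
        have "eventually (\<lambda>x. H x \<le> H c - y \<and> x \<in> ?G) at_bot"
          using limL' evL True unfolding filterlim_at_bot by (auto intro: eventually_conj)
        then show "eventually (\<lambda>x. ?I (H x + y) \<le> Z) at_bot"
        proof (rule eventually_mono)
          fix x assume x: "H x \<le> H c - y \<and> x \<in> ?G"
          have "H (?I (H x + y)) \<le> H c" using HI x by simp
          then have "?I (H x + y) \<le> c" using le_iff[OF IG cG] by simp
          then show "?I (H x + y) \<le> Z" by (simp add: c_def)
        qed
      qed
      then show ?thesis using True by simp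
    next
      case False
      have la: "xs i < a" using aG False by (auto simp: zero_gap_def)
      have "((\<lambda>x. ?I (H x + y)) \<longlongrightarrow> xs i) (at_right (xs i))"
        unfolding order_tendsto_iff
      proof (intro conjI allI impI)
        fix b assume "b < xs i"
        moreover have "xs i < ?I t" for t using IG[of t] False by (simp add: zero_gap_def)
        ultimately show "eventually (\<lambda>x. b < ?I (H x + y)) (at_right (xs i))"
          by (intro always_eventually allI) (blast intro: less_trans)
      next
        fix b assume b: "xs i < b"
        define c where "c = min b a"
        have cG: "c \<in> ?G" using aG b la by (auto simp: zero_gap_def c_def min_def)
        have "eventually (\<lambda>x. H x < H c - y) (at_right (xs i))"
          using limL' False unfolding filterlim_at_bot_dense by auto
        then show "eventually (\<lambda>x. ?I (H x + y) < b) (at_right (xs i))"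
        proof (rule eventually_mono)
          fix x assume x: "H x < H c - y"
          have "H (?I (H x + y)) < H c" using HI x by simp
          then have "?I (H x + y) < c" using less_iff[OF IG cG] by simp
          then show "?I (H x + y) < b" by (simp add: c_def)
        qed
      qed
      then show ?thesis using False by simp
    qed
  next
    show "if i = n then filterlim (\<lambda>x. ?I (H x + y)) at_top at_top
          else ((\<lambda>x. ?I (H x + y)) \<longlongrightarrow> xs (Suc i)) (at_left (xs (Suc i)))"
    proof (cases "i = n")
      case True
      have "filterlim (\<lambda>x. ?I (H x + y)) at_top at_top"
        unfolding filterlim_at_top
      proof
        fix Z
        define c where "c = max Z a"
        have cG: "c \<in> ?G" using aG True by (auto simp: zero_gap_def c_def max_def)
        have "eventually (\<lambda>x. H c - y \<le> H x) at_top"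
          using limR' True unfolding filterlim_at_top by auto
        then show "eventually (\<lambda>x. Z \<le> ?I (H x + y)) at_top"
        proof (rule eventually_mono)
          fix x assume x: "H c - y \<le> H x"
          have "H c \<le> H (?I (H x + y))" using HI x by simp
          then have "c \<le> ?I (H x + y)" using le_iff[OF cG IG] by simp
          then show "Z \<le> ?I (H x + y)" by (simp add: c_def)
        qed
      qed
      then show ?thesis using True by simp
    next
      case False
      have au: "a < xs (Suc i)" using aG False by (auto simp: zero_gap_def)
      have "((\<lambda>x. ?I (H x + y)) \<longlongrightarrow> xs (Suc i)) (at_left (xs (Suc i)))"
        unfolding order_tendsto_iff
      proof (intro conjI allI impI)
        fix b assume "xs (Suc i) < b"
        moreover have "?I t < xs (Suc i)" for t using IG[of t] False by (simp add: zero_gap_def)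
        ultimately show "eventually (\<lambda>x. ?I (H x + y) < b) (at_left (xs (Suc i)))"
          by (intro always_eventually allI) (blast intro: less_trans)
      next
        fix b assume b: "b < xs (Suc i)"
        define c where "c = max b a"
        have cG: "c \<in> ?G" using aG b au by (auto simp: zero_gap_def c_def max_def)
        have "eventually (\<lambda>x. H c - y < H x) (at_left (xs (Suc i)))"
          using limR' False unfolding filterlim_at_top_dense by auto
        then show "eventually (\<lambda>x. b < ?I (H x + y)) (at_left (xs (Suc i)))"
        proof (rule eventually_mono)
          fix x assume x: "H c - y < H x"
          have "H c < H (?I (H x + y))" using HI x by simp
          then have "c < ?I (H x + y)" using less_iff[OF cG IG] by simp
          then show "b < ?I (H x + y)" by (simp add: c_def)
        qed
      qed
      then show ?thesis using False by simp
    qed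
  qed
  show ?thesis using sm bijH bijI IH HI part by blast
qed


lemma sign_const:
  fixes \<sigma> :: "real \<Rightarrow> real"
  assumes cs: "continuous_on UNIV \<sigma>" and nz: "\<forall>x\<in>zero_gap xs n i. \<sigma> x \<noteq> 0"
    and uG: "u \<in> zero_gap xs n i" and vG: "v \<in> zero_gap xs n i" and su: "\<sigma> u > 0"
  shows "\<sigma> v > 0"
proof (rule ccontr)
  assume "\<not> \<sigma> v > 0"
  then have sv: "\<sigma> v < 0" using nz vG by force
  show False
  proof (cases "u \<le> v")
    case True
    have c: "continuous_on {u..v} (\<lambda>t. - \<sigma> t)" using cs by (auto intro!: continuous_intros intro: continuous_on_subset)
    obtain w where w: "u \<le> w" "w \<le> v" "- \<sigma> w = 0"
      using IVT'[of "\<lambda>t. - \<sigma> t" u 0 v, OF _ _ True c] su sv by auto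
    have "w \<in> zero_gap xs n i" using zg_conv[OF uG vG w(1,2)] .
    then show False using nz w by auto
  next
    case False
    have c: "continuous_on {v..u} \<sigma>" using cs by (auto intro: continuous_on_subset)
    obtain w where w: "v \<le> w" "w \<le> u" "\<sigma> w = 0"
      using IVT'[of \<sigma> v 0 u, OF _ _ _ c] su sv False by auto
    have "w \<in> zero_gap xs n i" using zg_conv[OF vG uG w(1,2)] .
    then show False using nz w by auto
  qed
qed


theorem lemma3:
  fixes \<sigma> :: "real \<Rightarrow> real" and xs :: "nat \<Rightarrow> real" and n i :: nat and a :: real
  assumes lip: "\<exists>L. L-lipschitz_on UNIV \<sigma>"
    and ord: "strict_mono_on {1..n} xs"
    and zeros: "{t. \<sigma> t = 0} = xs ` {1..n}"
    and i: "i \<le> n"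
    and a: "a \<in> zero_gap xs n i"
  shows "(\<forall>x\<in>zero_gap xs n i. (\<lambda>y. 1 / \<sigma> y) integrable_on {min a x..max a x})
    \<and> (mono_on (zero_gap xs n i) (H_fun \<sigma> a) \<or> antimono_on (zero_gap xs n i) (H_fun \<sigma> a))
    \<and> bij_betw (H_fun \<sigma> a) (zero_gap xs n i) UNIV
    \<and> bij_betw (inv_into (zero_gap xs n i) (H_fun \<sigma> a)) UNIV (zero_gap xs n i)
    \<and> (\<forall>x\<in>zero_gap xs n i. inv_into (zero_gap xs n i) (H_fun \<sigma> a) (H_fun \<sigma> a x) = x)
    \<and> (\<forall>t. H_fun \<sigma> a (inv_into (zero_gap xs n i) (H_fun \<sigma> a) t) = t)
    \<and> (\<forall>y::real.
         bij_betw (\<lambda>x. inv_into (zero_gap xs n i) (H_fun \<sigma> a) (H_fun \<sigma> a x + y))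
                  (zero_gap xs n i) (zero_gap xs n i)
       \<and> (if i = 0
          then filterlim (\<lambda>x. inv_into (zero_gap xs n i) (H_fun \<sigma> a) (H_fun \<sigma> a x + y)) at_bot at_bot
          else ((\<lambda>x. inv_into (zero_gap xs n i) (H_fun \<sigma> a) (H_fun \<sigma> a x + y))
                  \<longlongrightarrow> xs i) (at_right (xs i)))
       \<and> (if i = n
          then filterlim (\<lambda>x. inv_into (zero_gap xs n i) (H_fun \<sigma> a) (H_fun \<sigma> a x + y)) at_top at_top
          else ((\<lambda>x. inv_into (zero_gap xs n i) (H_fun \<sigma> a) (H_fun \<sigma> a x + y))
                  \<longlongrightarrow> xs (Suc i)) (at_left (xs (Suc i)))))"
  proof -
  let ?G = "zero_gap xs n i"
  obtain L0 where L0: "L0-lipschitz_on UNIV \<sigma>" using lip by blast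
  define L where "L = max L0 1"
  have Lip: "L-lipschitz_on UNIV \<sigma>" using lipschitz_on_le[OF L0] by (simp add: L_def)
  have Lp: "L > 0" by (simp add: L_def)
  have zl: "\<sigma> (xs i) = 0" if "i \<noteq> 0"
  proof -
    have "xs i \<in> xs ` {1..n}" using that i by auto
    then show ?thesis using zeros by blast
  qed
  have zr: "\<sigma> (xs (Suc i)) = 0" if "i \<noteq> n"
  proof -
    have "xs (Suc i) \<in> xs ` {1..n}" using that i by auto
    then show ?thesis using zeros by blast
  qed
  have nz: "\<forall>x\<in>?G. \<sigma> x \<noteq> 0"
  proof (intro ballI notI)
    fix x assume xG: "x \<in> ?G" and sx: "\<sigma> x = 0"
    then obtain k where k: "k \<in> {1..n}" "x = xs k" using zeros by blast
    show False
    proof (cases "k \<le> i")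
      case True
      then have "i \<noteq> 0" "i \<in> {1..n}" using k i by auto
      then have "xs k \<le> xs i" using strict_mono_on_leD[OF ord k(1) _ True] by auto
      moreover have "xs i < x" using xG \<open>i \<noteq> 0\<close> by (simp add: zero_gap_def)
      ultimately show False using k by simp
    next
      case False
      then have "i \<noteq> n" "Suc i \<in> {1..n}" "Suc i \<le> k" using k i by auto
      then have "xs (Suc i) \<le> xs k" using strict_mono_on_leD[OF ord _ k(1)] by auto
      moreover have "x < xs (Suc i)" using xG \<open>i \<noteq> n\<close> by (simp add: zero_gap_def)
      ultimately show False using k by simp
    qed
  qed
  have cs: "continuous_on UNIV \<sigma>" using Lip by (rule lipschitz_on_continuous_on)
  have integ: "\<forall>x\<in>?G. (\<lambda>y. 1 / \<sigma> y) integrable_on {min a x..max a x}"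
  proof
    fix x assume xG: "x \<in> ?G"
    have mG: "min a x \<in> ?G" "max a x \<in> ?G" using a xG by (auto simp: min_def max_def)
    have sub: "{min a x..max a x} \<subseteq> ?G" using zg_conv[OF mG] by auto
    have "continuous_on {min a x..max a x} (\<lambda>y. 1 / \<sigma> y)"
      using continuous_on_subset[OF cs] nz sub by (auto intro!: continuous_intros)
    then show "(\<lambda>y. 1 / \<sigma> y) integrable_on {min a x..max a x}"
      by (rule integrable_continuous_interval)
  qed
  have sa: "\<sigma> a \<noteq> 0" using nz a by auto
  show ?thesis
  proof (cases "\<sigma> a > 0")
    case True
    have pos: "\<forall>x\<in>?G. \<sigma> x > 0" using sign_const[OF cs nz a _ True] by blast
    have P: "(\<forall>x\<in>?G. (H_fun \<sigma> a has_real_derivative 1/\<sigma> x) (at x))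
      \<and> (if i = 0 then filterlim (H_fun \<sigma> a) at_bot at_bot else filterlim (H_fun \<sigma> a) at_bot (at_right (xs i)))
      \<and> (if i = n then filterlim (H_fun \<sigma> a) at_top at_top else filterlim (H_fun \<sigma> a) at_top (at_left (xs (Suc i))))"
      by (rule pos_case[OF Lip Lp a pos zl zr])
    have D: "\<forall>x\<in>?G. \<exists>d>0. (H_fun \<sigma> a has_real_derivative d) (at x)"
    proof
      fix x assume xG: "x \<in> ?G"
      show "\<exists>d>0. (H_fun \<sigma> a has_real_derivative d) (at x)"
        using conjunct1[OF P] xG pos by (intro exI[of _ "1/\<sigma> x"]) auto
    qed
    note A = abs_inc[OF a D conjunct1[OF conjunct2[OF P]] conjunct2[OF conjunct2[OF P]]]
    have mo: "mono_on ?G (H_fun \<sigma> a)" using strict_mono_on_imp_mono_on[OF conjunct1[OF A]] .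
    show ?thesis by (rule conjI[OF integ conjI[OF disjI1[OF mo] conjunct2[OF A]]])
  next
    case False
    then have sa': "\<sigma> a < 0" using sa by simp
    define \<tau> where "\<tau> = (\<lambda>t. - \<sigma> t)"
    have Lip': "L-lipschitz_on UNIV \<tau>" using Lip by (simp add: lipschitz_on_def \<tau>_def dist_minus)
    have pos: "\<forall>x\<in>?G. \<tau> x > 0"
    proof
      fix x assume xG: "x \<in> ?G"
      have cs': "continuous_on UNIV \<tau>" unfolding \<tau>_def using cs by (auto intro!: continuous_intros)
      have nz': "\<forall>x\<in>?G. \<tau> x \<noteq> 0" using nz by (simp add: \<tau>_def)
      show "\<tau> x > 0" using sign_const[OF cs' nz' a xG] sa' by (simp add: \<tau>_def)
    qed
    have zl': "\<tau> (xs i) = 0" if "i \<noteq> 0" using zl[OF that] by (simp add: \<tau>_def)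
    have zr': "\<tau> (xs (Suc i)) = 0" if "i \<noteq> n" using zr[OF that] by (simp add: \<tau>_def)
    define K where "K = H_fun \<tau> a"
    have P: "(\<forall>x\<in>?G. (K has_real_derivative 1/\<tau> x) (at x))
      \<and> (if i = 0 then filterlim K at_bot at_bot else filterlim K at_bot (at_right (xs i)))
      \<and> (if i = n then filterlim K at_top at_top else filterlim K at_top (at_left (xs (Suc i))))"
      unfolding K_def by (rule pos_case[OF Lip' Lp a pos zl' zr'])
    have D: "\<forall>x\<in>?G. \<exists>d>0. (K has_real_derivative d) (at x)"
    proof
      fix x assume xG: "x \<in> ?G"
      show "\<exists>d>0. (K has_real_derivative d) (at x)"
        using conjunct1[OF P] xG pos by (intro exI[of _ "1/\<tau> x"]) auto
    qed
    note A = abs_inc[OF a D conjunct1[OF conjunct2[OF P]] conjunct2[OF conjunct2[OF P]]]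
    have smK: "strict_mono_on ?G K" using conjunct1[OF A] .
    have bijK: "bij_betw K ?G UNIV" using conjunct1[OF conjunct2[OF A]] .
    have bijIK: "bij_betw (inv_into ?G K) UNIV ?G" using conjunct1[OF conjunct2[OF conjunct2[OF A]]] .
    have IK: "\<forall>x\<in>?G. inv_into ?G K (K x) = x" using conjunct1[OF conjunct2[OF conjunct2[OF conjunct2[OF A]]]] .
    have KI: "\<forall>t. K (inv_into ?G K t) = t" using conjunct1[OF conjunct2[OF conjunct2[OF conjunct2[OF conjunct2[OF A]]]]] .
    have AY: "\<And>y. bij_betw (\<lambda>x. inv_into ?G K (K x + y)) ?G ?G
       \<and> (if i = 0
          then filterlim (\<lambda>x. inv_into ?G K (K x + y)) at_bot at_bot
          else ((\<lambda>x. inv_into ?G K (K x + y)) \<longlongrightarrow> xs i) (at_right (xs i)))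
       \<and> (if i = n
          then filterlim (\<lambda>x. inv_into ?G K (K x + y)) at_top at_top
          else ((\<lambda>x. inv_into ?G K (K x + y)) \<longlongrightarrow> xs (Suc i)) (at_left (xs (Suc i))))"
      using spec[OF conjunct2[OF conjunct2[OF conjunct2[OF conjunct2[OF conjunct2[OF A]]]]]] .
    have HK: "H_fun \<sigma> a = (\<lambda>x. - K x)"
    proof
      fix x
      have e: "(\<lambda>y. 1 / \<tau> y) = (\<lambda>y. - (1 / \<sigma> y))" by (simp add: \<tau>_def)
      show "H_fun \<sigma> a x = - K x"
        unfolding K_def H_fun_def oriented_integral_def e integral_neg by simp
    qed
    have inv: "inv_into ?G (\<lambda>x. - K x) t = inv_into ?G K (- t)" for t
    proof -
      have "(\<lambda>y. y \<in> ?G \<and> - K y = t) = (\<lambda>y. y \<in> ?G \<and> K y = - t)" by auto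
      then show ?thesis by (simp add: inv_into_def)
    qed
    have bu: "bij_betw (uminus :: real \<Rightarrow> real) UNIV UNIV" using bij_uminus by (simp add: bij_def)
    show ?thesis
      unfolding HK inv
    proof (intro conjI)
      show "\<forall>x\<in>?G. (\<lambda>y. 1 / \<sigma> y) integrable_on {min a x..max a x}" by (rule integ)
      show "mono_on ?G (\<lambda>x. - K x) \<or> antimono_on ?G (\<lambda>x. - K x)"
        using strict_mono_on_leD[OF smK] by (auto simp: monotone_on_def)
      have "bij_betw (uminus \<circ> K) ?G UNIV" by (rule bij_betw_trans[OF bijK bu])
      then show "bij_betw (\<lambda>x. - K x) ?G UNIV" by (simp add: o_def)
      have "bij_betw (inv_into ?G K \<circ> uminus) UNIV ?G" by (rule bij_betw_trans[OF bu bijIK])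
      then show "bij_betw (\<lambda>t. inv_into ?G K (- t)) UNIV ?G" by (simp add: o_def)
      show "\<forall>x\<in>?G. inv_into ?G K (- (- K x)) = x" using IK by simp
      show "\<forall>t. - K (inv_into ?G K (- t)) = t" using KI by (metis minus_minus)
      show "\<forall>y. bij_betw (\<lambda>x. inv_into ?G K (- (- K x + y))) ?G ?G
       \<and> (if i = 0
          then filterlim (\<lambda>x. inv_into ?G K (- (- K x + y))) at_bot at_bot
          else ((\<lambda>x. inv_into ?G K (- (- K x + y))) \<longlongrightarrow> xs i) (at_right (xs i)))
       \<and> (if i = n
          then filterlim (\<lambda>x. inv_into ?G K (- (- K x + y))) at_top at_top
          else ((\<lambda>x. inv_into ?G K (- (- K x + y))) \<longlongrightarrow> xs (Suc i)) (at_left (xs (Suc i))))"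
      proof
        fix y
        have e: "(\<lambda>x. inv_into ?G K (- (- K x + y))) = (\<lambda>x. inv_into ?G K (K x + - y))" by simp
        show "bij_betw (\<lambda>x. inv_into ?G K (- (- K x + y))) ?G ?G
       \<and> (if i = 0
          then filterlim (\<lambda>x. inv_into ?G K (- (- K x + y))) at_bot at_bot
          else ((\<lambda>x. inv_into ?G K (- (- K x + y))) \<longlongrightarrow> xs i) (at_right (xs i)))
       \<and> (if i = n
          then filterlim (\<lambda>x. inv_into ?G K (- (- K x + y))) at_top at_top
          else ((\<lambda>x. inv_into ?G K (- (- K x + y))) \<longlongrightarrow> xs (Suc i)) (at_left (xs (Suc i))))"
          unfolding e by (rule AY)
      qed
    qed
  qed
qed

end
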